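(* Given an $L_1$-periodic tiling $T$ of type $(\gamma_1,\gamma_2,\gamma_3)$ with $\gamma_1,\gamma_2,\gamma_3>0$ and a source $z\neq0$ in $T$, let $T'=\mu_z(T)$ be the flipped tiling. Then \[ h_{T'}(x)=\begin{cases}h_T(x),&x\notin z+L_1,\\ h_T(x)+3,&\text{else}.\end{cases} \] Similarly, for a sink $z\neq0$ in $T$ and $T'=\mu_z(T)$, \[ h_{T'}(x)=\begin{cases}h_T(x),&x\notin z+L_1,\\ h_T(x)-3,&\text{else}.\end{cases} \]
   Context: Let $u^\top=(1,0)$, $v^\top=-(\tfrac12,\tfrac{\sqrt3}{2})$, $w=-(u+v)$, $L_0=\langle u,v\rangle$, and $L_1\le L_0$ a full-rank sublattice. An $L_1$-periodic tiling is an $L_1$-invariant map $T\colon L_0\to\{U,V,W\}$ such that for every $x$ exactly one of $T(x)=W$, $T(x+u)=V$, $T(x-v)=U$ holds; $T(x)$ removes one arrow of the upward triangle $x\to x+u\to x-v\to x$ ($U$: $x\to x+u$; $V$: $x-v\to x$; $W$: $x+u\to x-v$), and an arrow $x\to x+\alpha$ ($\alpha\in\{u,v,w\}$) is in $T$ if not removed. The type of $T$ counts the values $U,V,W$ over $L_0/L_1$. The height function $h_T$ satisfies $h_T(0)=0$ and $h_T(x+\alpha)=h_T(x)+1$ if $x\to x+\alpha$ is in $T$, else $h_T(x)-2$. A source (resp. sink) is a point where no arrow in $T$ ends (resp. starts). The flip $\mu_z(T)$ at a source $z$ is the tiling whose set of removed arrows is obtained from that of $T$ by deleting all arrows ending in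 $z+L_1$ and adding all arrows starting in $z+L_1$ (so $z$ becomes a sink); dually for a sink (delete removed arrows starting in $z+L_1$, add all arrows ending in $z+L_1$). Geometrically, the three lozenges meeting at each point of $z+L_1$ are replaced by the opposite configuration. *)

theory Defs
  imports Main "HOL-Library.Product_Plus"
begin

text \<open>Points of L_0 are written in the basis (u,v): the pair (a,b) stands for a*u + b*v.
  Thus u = (1,0), v = (0,1), w = -(u+v) = (-1,-1).\<close>

type_synonym pt = "int \<times> int"

definition uu :: pt where "uu = (1, 0)"
definition vv :: pt where "vv = (0, 1)"
definition ww :: pt where "ww = (-1, -1)"

datatype tile = U | V | W
datatype dir = Du | Dv | Dw

definition dvec :: "dir \<Rightarrow> pt" where
  "dvec d = (case d of Du \<Rightarrow> uu | Dv \<Rightarrow> vv | Dw \<Rightarrow> ww)"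

type_synonym arrow = "pt \<times> dir"

definition astart :: "arrow \<Rightarrow> pt" where "astart a = fst a"
definition aend :: "arrow \<Rightarrow> pt" where "aend a = fst a + dvec (snd a)"

definition full_rank_sublattice :: "pt set \<Rightarrow> bool" where
  "full_rank_sublattice L1 \<longleftrightarrow>
     0 \<in> L1 \<and> (\<forall>a\<in>L1. \<forall>b\<in>L1. a + b \<in> L1) \<and> (\<forall>a\<in>L1. - a \<in> L1) \<and>
     (\<exists>p\<in>L1. \<exists>q\<in>L1. fst p * snd q - snd p * fst q \<noteq> 0)"

definition coset :: "pt set \<Rightarrow> pt \<Rightarrow> pt set" where
  "coset L1 z = (\<lambda>l. z + l) ` L1"

definition periodic_tiling :: "pt set \<Rightarrow> (pt \<Rightarrow> tile) \<Rightarrow> bool" where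
  "periodic_tiling L1 T \<longleftrightarrow>
     (\<forall>x. \<forall>l\<in>L1. T (x + l) = T x) \<and>
     (\<forall>x. let P = (T x = W); Q = (T (x + uu) = V); R = (T (x - vv) = U) in
          (P \<and> \<not> Q \<and> \<not> R) \<or> (\<not> P \<and> Q \<and> \<not> R) \<or> (\<not> P \<and> \<not> Q \<and> R))"

text \<open>Number of cosets in L_0/L_1 on which T takes the value t (entries of the type).\<close>
definition type_count :: "pt set \<Rightarrow> (pt \<Rightarrow> tile) \<Rightarrow> tile \<Rightarrow> nat" where
  "type_count L1 T t = card {C. \<exists>x. C = coset L1 x \<and> T x = t}"

text \<open>Removed arrows: T x = U removes x -> x+u; V removes x-v -> x; W removes x+u -> x-v.\<close>
definition removed :: "(pt \<Rightarrow> tile) \<Rightarrow> arrow set" where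
  "removed T = {(x, Du) | x. T x = U} \<union> {(x - vv, Dv) | x. T x = V} \<union> {(x + uu, Dw) | x. T x = W}"

definition in_tiling :: "(pt \<Rightarrow> tile) \<Rightarrow> arrow \<Rightarrow> bool" where
  "in_tiling T a \<longleftrightarrow> a \<notin> removed T"

definition is_source :: "(pt \<Rightarrow> tile) \<Rightarrow> pt \<Rightarrow> bool" where
  "is_source T z \<longleftrightarrow> \<not> (\<exists>a. in_tiling T a \<and> aend a = z)"

definition is_sink :: "(pt \<Rightarrow> tile) \<Rightarrow> pt \<Rightarrow> bool" where
  "is_sink T z \<longleftrightarrow> \<not> (\<exists>a. in_tiling T a \<and> astart a = z)"

definition flip :: "pt set \<Rightarrow> (pt \<Rightarrow> tile) \<Rightarrow> pt \<Rightarrow> (pt \<Rightarrow> tile)" where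
  "flip L1 T z =
     (if is_source T z then
        (THE T'. removed T' = (removed T - {a. aend a \<in> coset L1 z}) \<union> {a. astart a \<in> coset L1 z})
      else
        (THE T'. removed T' = (removed T - {a. astart a \<in> coset L1 z}) \<union> {a. aend a \<in> coset L1 z}))"

definition is_height :: "(pt \<Rightarrow> tile) \<Rightarrow> (pt \<Rightarrow> int) \<Rightarrow> bool" where
  "is_height T h \<longleftrightarrow> h 0 = 0 \<and>
     (\<forall>x d. h (x + dvec d) = (if in_tiling T (x, d) then h x + 1 else h x - 2))"

definition height :: "(pt \<Rightarrow> tile) \<Rightarrow> pt \<Rightarrow> int" where
  "height T = (THE h. is_height T h)"

end

theory Submission
  imports Defs
begin

lemma dvec_simps[simp]: "dvec Du = (1,0)" "dvec Dv = (0,1)" "dvec Dw = (-1,-1)"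
  by (simp_all add: dvec_def uu_def vv_def ww_def)

lemma rem_Du: "(((a,b),Du) \<in> removed T) = (T (a,b) = U)"
  by (force simp: removed_def uu_def vv_def)
lemma rem_Dv: "(((a,b),Dv) \<in> removed T) = (T (a,b+1) = V)"
proof
  assume "((a,b),Dv) \<in> removed T"
  then obtain x where "(a,b) = x - vv" "T x = V" unfolding removed_def by auto
  then show "T (a,b+1) = V" by (cases x) (auto simp: vv_def)
next
  assume "T (a,b+1) = V"
  then show "((a,b),Dv) \<in> removed T" unfolding removed_def vv_def
    by (intro UnI1 UnI2) (rule CollectI, rule exI[of _ "(a,b+1)"], simp)
qed
lemma rem_Dw: "(((a,b),Dw) \<in> removed T) = (T (a-1,b) = W)"
proof
  assume "((a,b),Dw) \<in> removed T"
  then obtain x where "(a,b) = x + uu" "T x = W" unfolding removed_def by auto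
  then show "T (a-1,b) = W" by (cases x) (auto simp: uu_def)
next
  assume "T (a-1,b) = W"
  then show "((a,b),Dw) \<in> removed T" unfolding removed_def uu_def
    by (intro UnI2) (rule CollectI, rule exI[of _ "(a-1,b)"], simp)
qed

definition up1 :: "arrow set \<Rightarrow> int \<Rightarrow> int \<Rightarrow> bool" where
  "up1 R a b \<longleftrightarrow>
    (((a,b),Du) \<in> R \<and> ((a,b-1),Dv) \<notin> R \<and> ((a+1,b),Dw) \<notin> R) \<or>
    (((a,b),Du) \<notin> R \<and> ((a,b-1),Dv) \<in> R \<and> ((a+1,b),Dw) \<notin> R) \<or>
    (((a,b),Du) \<notin> R \<and> ((a,b-1),Dv) \<notin> R \<and> ((a+1,b),Dw) \<in> R)"

definition down1 :: "arrow set \<Rightarrow> int \<Rightarrow> int \<Rightarrow> bool" where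
  "down1 R a b \<longleftrightarrow>
    (((a,b),Dv) \<in> R \<and> ((a,b+1),Dw) \<notin> R \<and> ((a-1,b),Du) \<notin> R) \<or>
    (((a,b),Dv) \<notin> R \<and> ((a,b+1),Dw) \<in> R \<and> ((a-1,b),Du) \<notin> R) \<or>
    (((a,b),Dv) \<notin> R \<and> ((a,b+1),Dw) \<notin> R \<and> ((a-1,b),Du) \<in> R)"

lemma up_removed: "up1 (removed T) a b"
  unfolding up1_def rem_Du rem_Dv rem_Dw by (cases "T (a,b)") auto

lemma down_removed:
  assumes "periodic_tiling L1 T" shows "down1 (removed T) a b"
proof -
  have "let P = (T (a-1,b+1) = W); Q = (T ((a-1,b+1) + uu) = V); R = (T ((a-1,b+1) - vv) = U) in
          (P \<and> \<not> Q \<and> \<not> R) \<or> (\<not> P \<and> Q \<and> \<not> R) \<or> (\<not> P \<and> \<not> Q \<and> R)"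
    using assms unfolding periodic_tiling_def by blast
  then show ?thesis unfolding down1_def rem_Du rem_Dv rem_Dw by (simp add: uu_def vv_def Let_def) blast
qed

definition S :: "(int \<Rightarrow> int) \<Rightarrow> int \<Rightarrow> int" where
  "S g n = (if 0 \<le> n then sum g {0..<n} else - sum g {n..<0})"

lemma S0[simp]: "S g 0 = 0" by (simp add: S_def)

lemma S_step: "S g (n+1) = S g n + g n"
proof (cases "0 \<le> n")
  case True
  have "{0..<n+1} = insert n {0..<n}" using True by auto
  then show ?thesis using True by (simp add: S_def)
next
  case False
  show ?thesis
  proof (cases "n = -1")
    case True
    have "{-1..<0::int} = {-1}" by auto
    then show ?thesis using True by (simp add: S_def)
  next
    case F2: False
    have "{n..<0} = insert n {n+1..<0}" using False by auto
    then show ?thesis using False F2 by (simp add: S_def)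
  qed
qed

lemma int_const: fixes f :: "int \<Rightarrow> 'a" assumes "\<And>i. f (i+1) = f i" shows "f i = f 0"
proof (induct i rule: int_induct[where k=0])
  case base then show ?case by simp
next
  case (step1 i) then show ?case using assms by simp
next
  case (step2 i) then show ?case using assms[of "i-1"] by simp
qed

definition FF :: "arrow set \<Rightarrow> arrow \<Rightarrow> int" where
  "FF R x = (if x \<notin> R then 1 else -2)"

lemma up_sum: "up1 R a b \<Longrightarrow> FF R ((a,b),Du) + FF R ((a,b-1),Dv) + FF R ((a+1,b),Dw) = 0"
  unfolding up1_def FF_def by auto
lemma down_sum: "down1 R a b \<Longrightarrow> FF R ((a,b),Dv) + FF R ((a,b+1),Dw) + FF R ((a-1,b),Du) = 0"
  unfolding down1_def FF_def by auto

lemma height_exists: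
  assumes up: "\<And>a b. up1 R a b" and dn: "\<And>a b. down1 R a b"
  shows "\<exists>h. h (0,0) = 0 \<and> (\<forall>a b. h (a+1,b) = h (a,b) + FF R ((a,b),Du) \<and>
     h (a,b+1) = h (a,b) + FF R ((a,b),Dv) \<and> h (a-1,b-1) = h (a,b) + FF R ((a,b),Dw))"
proof -
  define h where "h = (\<lambda>(a,b). S (\<lambda>i. FF R ((i,0),Du)) a + S (\<lambda>j. FF R ((a,j),Dv)) b)"
  have hv: "h (a,b+1) = h (a,b) + FF R ((a,b),Dv)" for a b
    by (simp add: h_def S_step)
  have sq: "FF R ((a,b),Du) + FF R ((a+1,b),Dv) = FF R ((a,b),Dv) + FF R ((a,b+1),Du)" for a b
    using up_sum[OF up[of a "b+1"]] down_sum[OF dn[of "a+1" b]] by simp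
  have hu: "h (a+1,b) = h (a,b) + FF R ((a,b),Du)" for a b
  proof -
    define D where "D = (\<lambda>b. S (\<lambda>j. FF R ((a+1,j),Dv)) b - S (\<lambda>j. FF R ((a,j),Dv)) b
        + FF R ((a,0),Du) - FF R ((a,b),Du))"
    have "D (i+1) = D i" for i using sq[of a i] by (simp add: D_def S_step)
    then have "D b = D 0" by (rule int_const)
    then have "D b = 0" by (simp add: D_def)
    then show ?thesis by (simp add: D_def h_def S_step)
  qed
  have hw: "h (a-1,b-1) = h (a,b) + FF R ((a,b),Dw)" for a b
    using down_sum[OF dn[of a "b-1"]] hv[of a "b-1"] hu[of "a-1" "b-1"] by simp
  show ?thesis by (intro exI[of _ h]) (simp add: hv hu hw, simp add: h_def)
qed


definition hR :: "arrow set \<Rightarrow> (pt \<Rightarrow> int) \<Rightarrow> bool" where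
  "hR R h \<longleftrightarrow> h (0,0) = 0 \<and> (\<forall>a b. h (a+1,b) = h (a,b) + FF R ((a,b),Du) \<and>
     h (a,b+1) = h (a,b) + FF R ((a,b),Dv) \<and> h (a-1,b-1) = h (a,b) + FF R ((a,b),Dw))"

lemma is_height_iff: "is_height T h \<longleftrightarrow> hR (removed T) h"
proof
  assume H: "is_height T h"
  show "hR (removed T) h" unfolding hR_def
  proof (intro conjI allI)
    show "h (0,0) = 0" using H by (simp add: is_height_def zero_prod_def)
  next
    fix a b
    show "h (a+1,b) = h (a,b) + FF (removed T) ((a,b),Du)"
      using H unfolding is_height_def in_tiling_def FF_def
      by (elim conjE, drule_tac x="(a,b)" in spec, drule_tac x="Du" in spec) auto
    show "h (a,b+1) = h (a,b) + FF (removed T) ((a,b),Dv)"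
      using H unfolding is_height_def in_tiling_def FF_def
      by (elim conjE, drule_tac x="(a,b)" in spec, drule_tac x="Dv" in spec) auto
    show "h (a-1,b-1) = h (a,b) + FF (removed T) ((a,b),Dw)"
      using H unfolding is_height_def in_tiling_def FF_def
      by (elim conjE, drule_tac x="(a,b)" in spec, drule_tac x="Dw" in spec) auto
  qed
next
  assume H: "hR (removed T) h"
  show "is_height T h" unfolding is_height_def
  proof (intro conjI allI)
    show "h 0 = 0" using H by (simp add: hR_def zero_prod_def)
  next
    fix x :: pt and d
    obtain a b where x: "x = (a,b)" by (cases x)
    show "h (x + dvec d) = (if in_tiling T (x, d) then h x + 1 else h x - 2)"
      using H unfolding x hR_def in_tiling_def FF_def
      by (cases d) auto
  qed
qed

lemma hR_unique: assumes "hR R h1" "hR R h2" shows "h1 = h2"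
proof -
  define g where "g = (\<lambda>x. h1 x - h2 x)"
  have gu: "g (a+1,b) = g (a,b)" and gv: "g (a,b+1) = g (a,b)" for a b
    using assms unfolding hR_def g_def by simp_all
  have g0: "g (0,0) = 0" using assms unfolding hR_def g_def by simp
  have "g (a,b) = 0" for a b
  proof -
    have "g (a,b) = g (a,0)" using int_const[of "\<lambda>j. g (a,j)"] gv by simp
    also have "\<dots> = g (0,0)" using int_const[of "\<lambda>i. g (i,0)"] gu by simp
    finally show ?thesis using g0 by simp
  qed
  then show ?thesis unfolding g_def by (intro ext) (metis eq_iff_diff_eq_0 surj_pair)
qed

lemma height_eq: "hR (removed T) h \<Longrightarrow> height T = h"
  unfolding height_def is_height_iff
  by (rule the_equality) (auto intro: hR_unique)

lemma height_ex: assumes "periodic_tiling L1 T" shows "hR (removed T) (height T)"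
proof -
  obtain h where "hR (removed T) h"
    using height_exists[of "removed T", OF up_removed down_removed[OF assms]]
    unfolding hR_def by blast
  then show ?thesis using height_eq by simp
qed

lemma removed_inj: assumes "removed T1 = removed T2" shows "T1 = T2"
proof
  fix x :: pt
  obtain a b where x: "x = (a,b)" by (cases x)
  have 1: "(T1 (a,b) = U) = (T2 (a,b) = U)" using assms rem_Du by metis
  have 2: "(T1 (a,b) = V) = (T2 (a,b) = V)" using assms rem_Dv[of a "b-1"] by (metis diff_add_cancel)
  show "T1 x = T2 x" unfolding x using 1 2 by (cases "T1 (a,b)"; cases "T2 (a,b)") auto
qed

lemma removed_ex: assumes up: "\<And>a b. up1 R a b" shows "\<exists>T'. removed T' = R"
proof -
  define T' where "T' = (\<lambda>(a,b). if ((a,b),Du) \<in> R then U else if ((a,b-1),Dv) \<in> R then V else W)"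
  have "removed T' = R"
  proof (rule set_eqI)
    fix y :: arrow
    obtain a b d where y: "y = ((a,b),d)" by (metis surj_pair)
    show "y \<in> removed T' \<longleftrightarrow> y \<in> R"
      using up[of a "b+1"] up[of "a-1" b] unfolding y
      by (cases d) (auto simp: rem_Du rem_Dv rem_Dw T'_def up1_def)
  qed
  then show ?thesis by blast
qed

lemma flip_the: assumes up: "\<And>a b. up1 R a b" shows "removed (THE T'. removed T' = R) = R"
proof -
  obtain T0 where "removed T0 = R" using removed_ex[OF up] by blast
  then have "(THE T'. removed T' = R) = T0" by (intro the_equality) (auto intro: removed_inj)
  then show ?thesis using \<open>removed T0 = R\<close> by simp
qed

lemma aend_simps[simp]: "aend ((a,b),Du) = (a+1,b)" "aend ((a,b),Dv) = (a,b+1)" "aend ((a,b),Dw) = (a-1,b-1)"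
  "astart ((a,b),d) = (a,b)"
  by (simp_all add: aend_def astart_def)


lemma src_facts:
  assumes up: "\<And>a b. up1 R a b"
    and src: "\<And>a b. (a,b)\<in>C \<Longrightarrow> ((a-1,b),Du)\<in>R \<and> ((a,b-1),Dv)\<in>R \<and> ((a+1,b+1),Dw)\<in>R"
  shows src_out: "(a,b)\<in>C \<Longrightarrow> ((a,b),Du)\<notin>R \<and> ((a,b),Dv)\<notin>R \<and> ((a,b),Dw)\<notin>R"
    and src_nadj: "(a,b)\<in>C \<Longrightarrow> (a+1,b)\<notin>C \<and> (a,b+1)\<notin>C \<and> (a-1,b-1)\<notin>C"
proof -
  have out: "((a,b),Du)\<notin>R \<and> ((a,b),Dv)\<notin>R \<and> ((a,b),Dw)\<notin>R" if "(a,b)\<in>C" for a b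
    using src[OF that] up[of a b] up[of a "b+1"] up[of "a-1" b] unfolding up1_def by auto
  show "(a,b)\<in>C \<Longrightarrow> ((a,b),Du)\<notin>R \<and> ((a,b),Dv)\<notin>R \<and> ((a,b),Dw)\<notin>R" using out by blast
  show "(a,b)\<in>C \<Longrightarrow> (a+1,b)\<notin>C \<and> (a,b+1)\<notin>C \<and> (a-1,b-1)\<notin>C"
    using out[where a=a and b=b] src[of "a+1" b] src[of a "b+1"] src[of "a-1" "b-1"] by auto
qed

lemma flip_src_up:
  assumes up: "\<And>a b. up1 R a b"
    and src: "\<And>a b. (a,b)\<in>C \<Longrightarrow> ((a-1,b),Du)\<in>R \<and> ((a,b-1),Dv)\<in>R \<and> ((a+1,b+1),Dw)\<in>R"
  shows "up1 ((R - {x. aend x \<in> C}) \<union> {x. astart x \<in> C}) a b"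
proof -
  note nadj = src_nadj[OF up src]
  show ?thesis
    using up[of a b] src[of a b] src[of "a+1" b] src[of a "b-1"]
      nadj[where a=a and b=b] nadj[where a=a and b="b-1"] nadj[where a="a+1" and b=b]
    unfolding up1_def by auto
qed

lemma flip_src_height:
  assumes up: "\<And>a b. up1 R a b"
    and src: "\<And>a b. (a,b)\<in>C \<Longrightarrow> ((a-1,b),Du)\<in>R \<and> ((a,b-1),Dv)\<in>R \<and> ((a+1,b+1),Dw)\<in>R"
    and h: "hR R h" and z0: "(0,0) \<notin> C"
  shows "hR ((R - {x. aend x \<in> C}) \<union> {x. astart x \<in> C}) (\<lambda>x. if x \<in> C then h x + 3 else h x)"
proof -
  note nadj = src_nadj[OF up src]
  note out = src_out[OF up src]
  show ?thesis unfolding hR_def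
  proof (intro conjI allI)
    fix a b
    show "(if (a + 1, b) \<in> C then h (a + 1, b) + 3 else h (a + 1, b)) =
       (if (a, b) \<in> C then h (a, b) + 3 else h (a, b)) + FF (R - {x. aend x \<in> C} \<union> {x. astart x \<in> C}) ((a, b), Du)"
      using h[unfolded hR_def] src[of "a+1" b] nadj[where a=a and b=b] out[where a=a and b=b] unfolding FF_def by auto
    show "(if (a, b+1) \<in> C then h (a, b+1) + 3 else h (a, b+1)) =
       (if (a, b) \<in> C then h (a, b) + 3 else h (a, b)) + FF (R - {x. aend x \<in> C} \<union> {x. astart x \<in> C}) ((a, b), Dv)"
      using h[unfolded hR_def] src[of a "b+1"] nadj[where a=a and b=b] out[where a=a and b=b] unfolding FF_def by auto
    show "(if (a-1, b-1) \<in> C then h (a-1, b-1) + 3 else h (a-1, b-1)) =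
       (if (a, b) \<in> C then h (a, b) + 3 else h (a, b)) + FF (R - {x. aend x \<in> C} \<union> {x. astart x \<in> C}) ((a, b), Dw)"
      using h[unfolded hR_def] src[of "a-1" "b-1"] nadj[where a=a and b=b] out[where a=a and b=b] unfolding FF_def by auto
  qed (use h z0 in \<open>simp add: hR_def\<close>)
qed

lemma snk_facts:
  assumes up: "\<And>a b. up1 R a b"
    and snk: "\<And>a b. (a,b)\<in>C \<Longrightarrow> ((a,b),Du)\<in>R \<and> ((a,b),Dv)\<in>R \<and> ((a,b),Dw)\<in>R"
  shows snk_in: "(a,b)\<in>C \<Longrightarrow> ((a-1,b),Du)\<notin>R \<and> ((a,b-1),Dv)\<notin>R \<and> ((a+1,b+1),Dw)\<notin>R"
    and snk_nadj: "(a,b)\<in>C \<Longrightarrow> (a+1,b)\<notin>C \<and> (a,b+1)\<notin>C \<and> (a-1,b-1)\<notin>C"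
proof -
  have inn: "((a-1,b),Du)\<notin>R \<and> ((a,b-1),Dv)\<notin>R \<and> ((a+1,b+1),Dw)\<notin>R" if "(a,b)\<in>C" for a b
    using snk[OF that] up[of a b] up[of a "b+1"] up[of "a-1" b] unfolding up1_def by auto
  show "(a,b)\<in>C \<Longrightarrow> ((a-1,b),Du)\<notin>R \<and> ((a,b-1),Dv)\<notin>R \<and> ((a+1,b+1),Dw)\<notin>R" using inn by blast
  show "(a,b)\<in>C \<Longrightarrow> (a+1,b)\<notin>C \<and> (a,b+1)\<notin>C \<and> (a-1,b-1)\<notin>C"
    using snk[of a b] inn[where a="a+1" and b=b] inn[where a=a and b="b+1"] inn[where a="a-1" and b="b-1"] by auto
qed

lemma flip_snk_up:
  assumes up: "\<And>a b. up1 R a b"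
    and snk: "\<And>a b. (a,b)\<in>C \<Longrightarrow> ((a,b),Du)\<in>R \<and> ((a,b),Dv)\<in>R \<and> ((a,b),Dw)\<in>R"
  shows "up1 ((R - {x. astart x \<in> C}) \<union> {x. aend x \<in> C}) a b"
proof -
  note nadj = snk_nadj[OF up snk]
  show ?thesis
    using up[of a b] snk[of a b] snk[of "a+1" b] snk[of a "b-1"]
      nadj[where a=a and b=b] nadj[where a=a and b="b-1"] nadj[where a="a+1" and b=b]
    unfolding up1_def by auto
qed

lemma flip_snk_height:
  assumes up: "\<And>a b. up1 R a b"
    and snk: "\<And>a b. (a,b)\<in>C \<Longrightarrow> ((a,b),Du)\<in>R \<and> ((a,b),Dv)\<in>R \<and> ((a,b),Dw)\<in>R"
    and h: "hR R h" and z0: "(0,0) \<notin> C"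
  shows "hR ((R - {x. astart x \<in> C}) \<union> {x. aend x \<in> C}) (\<lambda>x. if x \<in> C then h x - 3 else h x)"
proof -
  note nadj = snk_nadj[OF up snk]
  note inn = snk_in[OF up snk]
  show ?thesis unfolding hR_def
  proof (intro conjI allI)
    fix a b
    show "(if (a + 1, b) \<in> C then h (a + 1, b) - 3 else h (a + 1, b)) =
       (if (a, b) \<in> C then h (a, b) - 3 else h (a, b)) + FF (R - {x. astart x \<in> C} \<union> {x. aend x \<in> C}) ((a, b), Du)"
      using h[unfolded hR_def] snk[of a b] nadj[where a=a and b=b] inn[where a="a+1" and b=b] unfolding FF_def by auto
    show "(if (a, b+1) \<in> C then h (a, b+1) - 3 else h (a, b+1)) =
       (if (a, b) \<in> C then h (a, b) - 3 else h (a, b)) + FF (R - {x. astart x \<in> C} \<union> {x. aend x \<in> C}) ((a, b), Dv)"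
      using h[unfolded hR_def] snk[of a b] nadj[where a=a and b=b] inn[where a=a and b="b+1"] unfolding FF_def by auto
    show "(if (a-1, b-1) \<in> C then h (a-1, b-1) - 3 else h (a-1, b-1)) =
       (if (a, b) \<in> C then h (a, b) - 3 else h (a, b)) + FF (R - {x. astart x \<in> C} \<union> {x. aend x \<in> C}) ((a, b), Dw)"
      using h[unfolded hR_def] snk[of a b] nadj[where a=a and b=b] inn[where a="a-1" and b="b-1"] unfolding FF_def by auto
  qed (use h z0 in \<open>simp add: hR_def\<close>)
qed


lemma source_iff: "is_source T z \<longleftrightarrow> (\<forall>d. (z - dvec d, d) \<in> removed T)"
  unfolding is_source_def in_tiling_def aend_def
proof (intro iffI allI)
  fix d assume H: "\<nexists>a. a \<notin> removed T \<and> fst a + dvec (snd a) = z"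
  show "(z - dvec d, d) \<in> removed T"
    using H by (metis diff_add_cancel fst_conv snd_conv)
next
  assume H: "\<forall>d. (z - dvec d, d) \<in> removed T"
  show "\<nexists>a. a \<notin> removed T \<and> fst a + dvec (snd a) = z"
  proof
    assume "\<exists>a. a \<notin> removed T \<and> fst a + dvec (snd a) = z"
    then obtain p d where "(p,d) \<notin> removed T" "p + dvec d = z" by auto
    then show False using H by (metis add_diff_cancel)
  qed
qed

lemma sink_iff: "is_sink T z \<longleftrightarrow> (\<forall>d. (z, d) \<in> removed T)"
  unfolding is_sink_def in_tiling_def astart_def
  by (auto, metis prod.collapse)

theorem lemma6p39:
  fixes L1 :: "(int \<times> int) set" and T :: "int \<times> int \<Rightarrow> tile" and z :: "int \<times> int"
  assumes "full_rank_sublattice L1"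
    and "periodic_tiling L1 T"
    and "type_count L1 T U > 0" and "type_count L1 T V > 0" and "type_count L1 T W > 0"
    and "z \<notin> L1"
  shows "(is_source T z \<longrightarrow>
            (\<forall>x. height (flip L1 T z) x =
                   (if x \<in> coset L1 z then height T x + 3 else height T x))) \<and>
         (is_sink T z \<longrightarrow>
            (\<forall>x. height (flip L1 T z) x =
                   (if x \<in> coset L1 z then height T x - 3 else height T x)))"
proof -
  let ?R = "removed T"
  let ?C = "coset L1 z"
  have neg: "\<And>a. a \<in> L1 \<Longrightarrow> - a \<in> L1" using assms(1) unfolding full_rank_sublattice_def by blast
  have per: "\<And>x l. l \<in> L1 \<Longrightarrow> T (x + l) = T x" using assms(2) unfolding periodic_tiling_def by blast
  have Rinv: "((x + l, d) \<in> ?R) = ((x, d) \<in> ?R)" if l: "l \<in> L1" for x l d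
  proof -
    obtain a b where x: "x = (a,b)" by (cases x)
    obtain l1 l2 where ll: "l = (l1,l2)" by (cases l)
    have p1: "T (a+l1, b+l2) = T (a,b)" using per[OF l, of "(a,b)"] ll by simp
    have p2: "T (a+l1, b+l2+1) = T (a,b+1)" using per[OF l, of "(a,b+1)"] ll by (simp add: ac_simps)
    have p3: "T (a+l1-1, b+l2) = T (a-1,b)" using per[OF l, of "(a-1,b)"] ll by (simp add: algebra_simps)
    show ?thesis unfolding x ll using p1 p2 p3
      by (cases d) (simp_all add: rem_Du rem_Dv rem_Dw)
  qed
  have Cmem: "\<exists>l\<in>L1. c = z + l" if "c \<in> ?C" for c using that unfolding coset_def by blast
  have z0: "(0,0) \<notin> ?C"
  proof
    assume "(0,0) \<in> ?C"
    then obtain l where l: "l \<in> L1" "(0,0) = z + l" using Cmem by blast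
    then have "z = - l" by (simp add: zero_prod_def[symmetric] eq_neg_iff_add_eq_0)
    then show False using neg[OF l(1)] assms(6) by simp
  qed
  have up: "\<And>a b. up1 ?R a b" by (rule up_removed)
  have hT: "hR ?R (height T)" by (rule height_ex[OF assms(2)])
  show ?thesis
  proof (intro conjI impI)
    assume s: "is_source T z"
    have srcv: "(c - dvec d, d) \<in> ?R" if cC: "c \<in> ?C" for c d
    proof -
      obtain l where l: "l \<in> L1" "c = z + l" using Cmem[OF cC] by blast
      have e: "(c - dvec d, d) = ((z - dvec d) + l, d)" using l(2) by (simp add: algebra_simps)
      have "((z - dvec d) + l, d) \<in> ?R" using Rinv[OF l(1), of "z - dvec d" d] s unfolding source_iff by blast
      then show ?thesis using e by metis
    qed
    have src: "((a-1,b),Du)\<in>?R \<and> ((a,b-1),Dv)\<in>?R \<and> ((a+1,b+1),Dw)\<in>?R" if "(a,b) \<in> ?C" for a b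
      using srcv[OF that, of Du] srcv[OF that, of Dv] srcv[OF that, of Dw] by simp
    let ?R' = "(?R - {x. aend x \<in> ?C}) \<union> {x. astart x \<in> ?C}"
    have fl: "flip L1 T z = (THE T'. removed T' = ?R')" using s unfolding flip_def by simp
    have rf: "removed (flip L1 T z) = ?R'" unfolding fl
      by (rule flip_the) (rule flip_src_up[OF up src])
    have "height (flip L1 T z) = (\<lambda>x. if x \<in> ?C then height T x + 3 else height T x)"
      by (rule height_eq) (unfold rf, rule flip_src_height[OF up src hT z0])
    then show "\<forall>x. height (flip L1 T z) x = (if x \<in> ?C then height T x + 3 else height T x)" by simp
  next
    assume s: "is_sink T z"
    have snkv: "(c, d) \<in> ?R" if cC: "c \<in> ?C" for c d
    proof -
      obtain l where l: "l \<in> L1" "c = z + l" using Cmem[OF cC] by blast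
      then show ?thesis using Rinv[OF l(1)] s unfolding sink_iff by simp
    qed
    have snk: "((a,b),Du)\<in>?R \<and> ((a,b),Dv)\<in>?R \<and> ((a,b),Dw)\<in>?R" if "(a,b) \<in> ?C" for a b
      using snkv[OF that] by simp
    have ns: "\<not> is_source T z"
    proof
      assume "is_source T z"
      then have "(z - dvec Dv, Dv) \<in> ?R" unfolding source_iff by blast
      moreover have "(z, Du) \<in> ?R" using s unfolding sink_iff by blast
      moreover obtain a b where "z = (a,b)" by (cases z)
      ultimately show False using up[of a b] unfolding up1_def by simp
    qed
    let ?R' = "(?R - {x. astart x \<in> ?C}) \<union> {x. aend x \<in> ?C}"
    have fl: "flip L1 T z = (THE T'. removed T' = ?R')" using ns unfolding flip_def by simp
    have rf: "removed (flip L1 T z) = ?R'" unfolding fl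
      by (rule flip_the) (rule flip_snk_up[OF up snk])
    have "height (flip L1 T z) = (\<lambda>x. if x \<in> ?C then height T x - 3 else height T x)"
      by (rule height_eq) (unfold rf, rule flip_snk_height[OF up snk hT z0])
    then show "\<forall>x. height (flip L1 T z) x = (if x \<in> ?C then height T x - 3 else height T x)" by simp
  qed
qed

end
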